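(* Every LCS-complete space is completely Baire, i.e. every closed subspace of it is a Baire space. In particular every LCS-complete space is Baire.
   Context: A Baire space is a space in which every intersection of countably many dense open subsets is dense. A space is LCS-complete if it is homeomorphic to a $G_\delta$ subset (countable intersection of open sets), with the subspace topology, of some locally compact sober space, locally compact meaning every point has a neighborhood base of compact saturated sets. *)

theory Defs
  imports "HOL-Analysis.Analysis"
begin

definition Baire_space :: "'a topology \<Rightarrow> bool" where
  "Baire_space X \<longleftrightarrow>
     (\<forall>\<U>. countable \<U> \<and> (\<forall>U\<in>\<U>. openin X U \<and> X closure_of U = topspace X)
        \<longrightarrow> X closure_of (topspace X \<inter> \<Inter>\<U>) = topspace X)"

definition completely_Baire_space :: "'a topology \<Rightarrow> bool" where
  "completely_Baire_space X \<longleftrightarrow>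
     (\<forall>C. closedin X C \<longrightarrow> Baire_space (subtopology X C))"

text \<open>Saturated set: intersection of its open neighbourhoods
  (equivalently, upward closed in the specialization preorder).\<close>
definition saturated_in :: "'a topology \<Rightarrow> 'a set \<Rightarrow> bool" where
  "saturated_in X A \<longleftrightarrow>
     A \<subseteq> topspace X \<and> A = topspace X \<inter> \<Inter>{U. openin X U \<and> A \<subseteq> U}"

definition locally_compact_sat :: "'a topology \<Rightarrow> bool" where
  "locally_compact_sat X \<longleftrightarrow>
     (\<forall>x\<in>topspace X. \<forall>U. openin X U \<and> x \<in> U \<longrightarrow>
        (\<exists>Q. compactin X Q \<and> saturated_in X Q \<and> x \<in> X interior_of Q \<and> Q \<subseteq> U))"

definition irreducible_closedin :: "'a topology \<Rightarrow> 'a set \<Rightarrow> bool" where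
  "irreducible_closedin X C \<longleftrightarrow>
     closedin X C \<and> C \<noteq> {} \<and>
     (\<forall>F1 F2. closedin X F1 \<and> closedin X F2 \<and> C \<subseteq> F1 \<union> F2 \<longrightarrow> C \<subseteq> F1 \<or> C \<subseteq> F2)"

definition sober_space :: "'a topology \<Rightarrow> bool" where
  "sober_space X \<longleftrightarrow>
     (\<forall>C. irreducible_closedin X C \<longrightarrow> (\<exists>!x. x \<in> topspace X \<and> X closure_of {x} = C))"

end

theory Submission
  imports Defs
begin

lemma finite_chain_max:
  assumes "finite G" "G \<noteq> {}" "\<forall>X\<in>G. \<forall>Y\<in>G. X \<subseteq> Y \<or> Y \<subseteq> X"
  shows "\<exists>B\<in>G. \<forall>X\<in>G. X \<subseteq> B"
  using assms
proof (induction G rule: finite_ne_induct)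
  case (singleton x)
  then show ?case by auto
next
  case (insert x F)
  then obtain B where "B \<in> F" "\<forall>X\<in>F. X \<subseteq> B" by auto
  then show ?case using insert.prems by (metis insert_iff subset_trans)
qed

lemma key_nonempty:
  fixes Y :: "'b topology" and Q :: "nat \<Rightarrow> 'b set"
  assumes sob: "sober_space Y"
    and dec: "\<And>n. Q (Suc n) \<subseteq> Q n"
    and comp: "\<And>n. compactin Y (Q n)"
    and sat: "\<And>n. saturated_in Y (Q n)"
    and F: "closedin Y F"
    and meet: "\<And>n. F \<inter> Q n \<noteq> {}"
  shows "\<exists>x\<in>F. \<forall>n. x \<in> Q n"
proof -
  have Qt: "Q n \<subseteq> topspace Y" for n using comp compactin_subset_topspace by blast
  have anti: "m \<le> n \<Longrightarrow> Q n \<subseteq> Q m" for m n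
    by (rule lift_Suc_antimono_le[of Q]) (use dec in auto)
  define \<A> where "\<A> = {U. openin Y U \<and> topspace Y - F \<subseteq> U \<and> (\<forall>n. \<not> Q n \<subseteq> U)}"
  have "\<exists>M\<in>\<A>. \<forall>X\<in>\<A>. M \<subseteq> X \<longrightarrow> X = M"
  proof (rule Zorn_Lemma2, intro ballI)
    fix C assume C: "C \<in> chains \<A>"
    then have CA: "C \<subseteq> \<A>" and ch: "subset.chain \<A> C" using C by (auto simp: chains_alt_def subset_chain_def)
    define U where "U = (topspace Y - F) \<union> \<Union>C"
    have Uo: "openin Y U" unfolding U_def using CA F by (auto simp: \<A>_def)
    have "\<not> Q n \<subseteq> U" for n
    proof
      assume sub: "Q n \<subseteq> U"
      have "Q n \<subseteq> \<Union>(insert (topspace Y - F) C)" using sub by (auto simp: U_def)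
      moreover have "\<forall>V\<in>insert (topspace Y - F) C. openin Y V" using CA F by (auto simp: \<A>_def)
      ultimately obtain G where G: "finite G" "G \<subseteq> insert (topspace Y - F) C" "Q n \<subseteq> \<Union>G"
        using comp[of n] unfolding compactin_def by meson
      show False
      proof (cases "G - {topspace Y - F} = {}")
        case True
        then have "Q n \<subseteq> topspace Y - F" using G by auto
        then show False using meet[of n] by auto
      next
        case False
        have GC: "G - {topspace Y - F} \<subseteq> C" using G by auto
        have "\<forall>X\<in>G - {topspace Y - F}. \<forall>Z\<in>G - {topspace Y - F}. X \<subseteq> Z \<or> Z \<subseteq> X"
          using ch GC unfolding subset_chain_def by blast
        moreover have fin: "finite (G - {topspace Y - F})" using G(1) by simp
        ultimately have "\<exists>B\<in>G - {topspace Y - F}. \<forall>X\<in>G - {topspace Y - F}. X \<subseteq> B"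
          using finite_chain_max[OF fin False] by simp
        then obtain B where B0: "B \<in> G - {topspace Y - F}" "\<forall>X\<in>G - {topspace Y - F}. X \<subseteq> B"
          by (elim bexE)
        have B: "B \<in> G - {topspace Y - F}" "\<Union>(G - {topspace Y - F}) \<subseteq> B"
          using B0 by (simp, intro Union_least, simp)
        then have "B \<in> \<A>" using G CA by auto
        then have "topspace Y - F \<subseteq> B" unfolding \<A>_def by blast
        moreover have "\<Union>G \<subseteq> (topspace Y - F) \<union> \<Union>(G - {topspace Y - F})" by blast
        moreover have "(topspace Y - F) \<union> \<Union>(G - {topspace Y - F}) \<subseteq> B"
          using B(2) calculation(1) by (intro Un_least)
        ultimately have "\<Union>G \<subseteq> B" by (metis subset_trans)
        then have "Q n \<subseteq> B" using G(3) by (rule subset_trans[rotated])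
        then show False using \<open>B \<in> \<A>\<close> by (auto simp: \<A>_def)
      qed
    qed
    then have "U \<in> \<A>" using Uo by (auto simp: \<A>_def U_def)
    moreover have "\<forall>X\<in>C. X \<subseteq> U" unfolding U_def by (simp add: Union_upper le_supI2)
    ultimately show "\<exists>U\<in>\<A>. \<forall>X\<in>C. X \<subseteq> U" by (intro bexI)
  qed
  then obtain M where MA: "M \<in> \<A>" and Mmax: "\<And>X. X \<in> \<A> \<Longrightarrow> M \<subseteq> X \<Longrightarrow> X = M" by blast
  define K where "K = topspace Y - M"
  have Mo: "openin Y M" and MF: "topspace Y - F \<subseteq> M" and MQ: "\<And>n. \<not> Q n \<subseteq> M"
    using MA by (auto simp: \<A>_def)
  have Kc: "closedin Y K" using Mo by (simp add: K_def closedin_diff)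
  have KF: "K \<subseteq> F" using MF by (auto simp: K_def)
  have KQ: "K \<inter> Q n \<noteq> {}" for n using MQ[of n] Qt[of n] by (auto simp: K_def)
  have irr: "irreducible_closedin Y K"
    unfolding irreducible_closedin_def
  proof (intro conjI allI impI)
    show "K \<noteq> {}" using KQ[of 0] by auto
    fix F1 F2 assume H: "closedin Y F1 \<and> closedin Y F2 \<and> K \<subseteq> F1 \<union> F2"
    show "K \<subseteq> F1 \<or> K \<subseteq> F2"
    proof (rule ccontr)
      assume nn: "\<not> (K \<subseteq> F1 \<or> K \<subseteq> F2)"
      have ex: "\<exists>n. Q n \<subseteq> M \<union> (topspace Y - Fi)" if "closedin Y Fi" "\<not> K \<subseteq> Fi" for Fi
      proof (rule ccontr)
        assume "\<nexists>n. Q n \<subseteq> M \<union> (topspace Y - Fi)"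
        then have "M \<union> (topspace Y - Fi) \<in> \<A>" using Mo MF that(1)
          by (auto simp: \<A>_def intro!: openin_Un openin_diff)
        then have "M \<union> (topspace Y - Fi) = M" using Mmax by blast
        then show False using that(2) by (auto simp: K_def)
      qed
      obtain n1 where n1: "Q n1 \<subseteq> M \<union> (topspace Y - F1)" using ex H nn by blast
      obtain n2 where n2: "Q n2 \<subseteq> M \<union> (topspace Y - F2)" using ex H nn by blast
      have "Q (max n1 n2) \<subseteq> M"
      proof
        fix z assume z: "z \<in> Q (max n1 n2)"
        then have "z \<in> Q n1" "z \<in> Q n2" "z \<in> topspace Y"
          using anti[of n1 "max n1 n2"] anti[of n2 "max n1 n2"] Qt by auto
        then show "z \<in> M" using n1 n2 H unfolding K_def by blast
      qed
      then show False using MQ by blast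
    qed
  qed (use Kc in auto)
  then obtain x where x: "x \<in> topspace Y" "Y closure_of {x} = K"
    using sob unfolding sober_space_def by blast
  have xK: "x \<in> K" using x by (metis closure_of_subset empty_subsetI insert_subset)
  have "x \<in> Q n" for n
  proof -
    obtain y where y: "y \<in> K" "y \<in> Q n" using KQ[of n] by blast
    have "x \<in> U" if "openin Y U" "Q n \<subseteq> U" for U
    proof (rule ccontr)
      assume "x \<notin> U"
      then have "{x} \<subseteq> topspace Y - U" using x by auto
      then have "K \<subseteq> topspace Y - U" using x that
        by (metis closure_of_minimal closedin_diff closedin_topspace)
      then show False using y that by auto
    qed
    then show ?thesis using sat[of n] x unfolding saturated_in_def by blast
  qed
  then show ?thesis using xK KF by blast
qed

lemma main_construct:
  fixes Y :: "'b topology" and A :: "nat \<Rightarrow> 'b set"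
  assumes sob: "sober_space Y" and LC: "locally_compact_sat Y"
    and F: "closedin Y F" and SF: "S' \<subseteq> F"
    and Ao: "\<And>n. openin Y (A n)"
    and dens: "\<And>n G. openin Y G \<Longrightarrow> G \<inter> S' \<noteq> {} \<Longrightarrow> G \<inter> S' \<inter> A n \<noteq> {}"
    and Ob: "openin Y Ob" "Ob \<inter> S' \<noteq> {}"
  shows "\<exists>x\<in>F \<inter> Ob. \<forall>n. x \<in> A n"
proof -
  have step: "\<exists>Q. compactin Y Q \<and> saturated_in Y Q \<and> Q \<subseteq> G \<inter> A n \<and> Y interior_of Q \<inter> S' \<noteq> {}"
    if G: "openin Y G" "G \<inter> S' \<noteq> {}" for G n
  proof -
    obtain x where x: "x \<in> G" "x \<in> S'" "x \<in> A n" using dens[OF G] by blast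
    have xt: "x \<in> topspace Y" using x(1) G(1) openin_subset by blast
    have "openin Y (G \<inter> A n)" using G(1) Ao by blast
    moreover have "x \<in> G \<inter> A n" using x by simp
    ultimately obtain Q where Q: "compactin Y Q" "saturated_in Y Q" "x \<in> Y interior_of Q" "Q \<subseteq> G \<inter> A n"
      using LC xt unfolding locally_compact_sat_def by meson
    have "Y interior_of Q \<inter> S' \<noteq> {}" using Q(3) x(2) by auto
    then show ?thesis using Q by auto
  qed
  define ch where "ch n G = (SOME Q. compactin Y Q \<and> saturated_in Y Q \<and> Q \<subseteq> G \<inter> A n \<and> Y interior_of Q \<inter> S' \<noteq> {})" for n G
  have chp: "compactin Y (ch n G) \<and> saturated_in Y (ch n G) \<and> ch n G \<subseteq> G \<inter> A n \<and> Y interior_of (ch n G) \<inter> S' \<noteq> {}"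
    if "openin Y G" "G \<inter> S' \<noteq> {}" for G n
    unfolding ch_def by (rule someI_ex) (rule step[OF that])
  define Gs where "Gs = rec_nat Ob (\<lambda>n G. Y interior_of (ch n G))"
  have Gs0: "Gs 0 = Ob" and GsS: "Gs (Suc n) = Y interior_of (ch n (Gs n))" for n
    by (simp_all add: Gs_def)
  have inv: "openin Y (Gs n) \<and> Gs n \<inter> S' \<noteq> {}" for n
  proof (induction n)
    case 0 then show ?case using Ob Gs0 by simp
  next
    case (Suc n)
    then show ?case using chp[of "Gs n" n] GsS[of n] by simp
  qed
  define Q where "Q n = ch n (Gs n)" for n
  have Qp: "compactin Y (Q n) \<and> saturated_in Y (Q n) \<and> Q n \<subseteq> Gs n \<inter> A n \<and> Y interior_of (Q n) \<inter> S' \<noteq> {}" for n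
    unfolding Q_def using chp[OF inv[THEN conjunct1] inv[THEN conjunct2]] by simp
  have dec: "Q (Suc n) \<subseteq> Q n" for n
    using Qp[of "Suc n"] GsS[of n] interior_of_subset[of Y "Q n"] unfolding Q_def by auto
  have meet: "F \<inter> Q n \<noteq> {}" for n
  proof -
    obtain z where "z \<in> Y interior_of (Q n)" "z \<in> S'" using Qp[of n] by auto
    then show ?thesis using interior_of_subset[of Y "Q n"] SF by auto
  qed
  obtain x where x: "x \<in> F" "\<forall>n. x \<in> Q n"
    using key_nonempty[of Y Q F, OF sob dec _ _ F meet] Qp by metis
  have "x \<in> A n" for n using x(2) Qp[of n] by auto
  moreover have "x \<in> Ob" using x(2) Qp[of 0] Gs0 by auto
  ultimately show ?thesis using x(1) by auto
qed

lemma Baire_sub: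
  fixes Y :: "'b topology"
  assumes sob: "sober_space Y" and LC: "locally_compact_sat Y"
    and G: "gdelta_in Y S" and F: "closedin Y F"
  shows "Baire_space (subtopology Y (S \<inter> F))"
proof -
  have St: "S \<subseteq> topspace Y" and "(countable intersection_of openin Y) S"
    using G by (auto simp: gdelta_in_alt)
  then obtain T where T: "countable T" "\<And>t. t \<in> T \<Longrightarrow> openin Y t" "\<Inter>T = S"
    unfolding intersection_of_def by blast
  define S' where "S' = S \<inter> F"
  have tS: "topspace (subtopology Y S') = S'" using St by (auto simp: S'_def)
  show ?thesis
    unfolding Baire_space_def S'_def[symmetric]
  proof (intro allI impI)
    fix \<U> assume H: "countable \<U> \<and> (\<forall>U\<in>\<U>. openin (subtopology Y S') U \<and> subtopology Y S' closure_of U = topspace (subtopology Y S'))"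
    define V where "V U = (SOME V. openin Y V \<and> U = V \<inter> S')" for U
    have Vp: "openin Y (V U) \<and> U = V U \<inter> S'" if "U \<in> \<U>" for U
      unfolding V_def by (rule someI_ex) (use H that in \<open>auto simp: openin_subtopology\<close>)
    define \<A> where "\<A> = insert (topspace Y) (V ` \<U> \<union> T)"
    have cA: "countable \<A>" using H T(1) by (simp add: \<A>_def)
    have nA: "\<A> \<noteq> {}" by (simp add: \<A>_def)
    define A where "A = from_nat_into \<A>"
    have AA: "A n \<in> \<A>" for n using nA by (simp add: A_def from_nat_into)
    have rA: "range A = \<A>" using cA nA by (simp add: A_def range_from_nat_into)
    have Ao: "openin Y (A n)" for n
      using AA[of n] T(2) Vp unfolding \<A>_def by auto
    have densB: "Gs \<inter> S' \<inter> B \<noteq> {}" if B: "B \<in> \<A>" and Gs: "openin Y Gs" "Gs \<inter> S' \<noteq> {}" for B Gs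
    proof -
      obtain z where z: "z \<in> Gs" "z \<in> S'" using Gs by blast
      have zt: "z \<in> topspace Y" using z St by (auto simp: S'_def)
      consider "B = topspace Y" | "B \<in> T" | U where "U \<in> \<U>" "B = V U"
        using B unfolding \<A>_def by auto
      then show ?thesis
      proof cases
        case 1 then show ?thesis using z zt by blast
      next
        case 2 then have "S \<subseteq> B" using T(3) by blast
        then show ?thesis using z by (auto simp: S'_def)
      next
        case 3
        have "z \<in> subtopology Y S' closure_of U" using H 3 z tS by auto
        moreover have "openin (subtopology Y S') (Gs \<inter> S')" using Gs(1) by (rule openin_subtopology_Int)
        ultimately obtain y where "y \<in> U" "y \<in> Gs \<inter> S'"
          using z unfolding in_closure_of by blast
        then show ?thesis using Vp[OF 3(1)] 3(2) by blast
      qed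
    qed
    have dens: "Gs \<inter> S' \<inter> A n \<noteq> {}" if "openin Y Gs" "Gs \<inter> S' \<noteq> {}" for n Gs
      using densB[OF AA that] .
    show "subtopology Y S' closure_of (topspace (subtopology Y S') \<inter> \<Inter>\<U>) = topspace (subtopology Y S')"
    proof (rule subset_antisym)
      show "subtopology Y S' closure_of (topspace (subtopology Y S') \<inter> \<Inter>\<U>) \<subseteq> topspace (subtopology Y S')"
        by (rule closure_of_subset_topspace)
      show "topspace (subtopology Y S') \<subseteq> subtopology Y S' closure_of (topspace (subtopology Y S') \<inter> \<Inter>\<U>)"
      proof
        fix z assume z: "z \<in> topspace (subtopology Y S')"
        show "z \<in> subtopology Y S' closure_of (topspace (subtopology Y S') \<inter> \<Inter>\<U>)"
          unfolding in_closure_of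
        proof (intro conjI allI impI z)
          fix W assume W: "z \<in> W \<and> openin (subtopology Y S') W"
          then obtain Ob where Ob: "openin Y Ob" "W = Ob \<inter> S'" by (auto simp: openin_subtopology)
          have "Ob \<inter> S' \<noteq> {}" using W Ob by auto
          then obtain x where x: "x \<in> F \<inter> Ob" "\<forall>n. x \<in> A n"
            using main_construct[where A=A and S'=S' and Ob=Ob and F=F, OF sob LC F _ Ao dens Ob(1) \<open>Ob \<inter> S' \<noteq> {}\<close>] by (auto simp: S'_def)
          have xA: "x \<in> B" if "B \<in> \<A>" for B using x(2) rA that by auto
          have "x \<in> S" using xA T(3) unfolding \<A>_def by auto
          then have xS': "x \<in> S'" using x(1) by (simp add: S'_def)
          have "x \<in> U" if "U \<in> \<U>" for U using xA[of "V U"] Vp[OF that] xS' that unfolding \<A>_def by auto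
          then show "\<exists>y. y \<in> topspace (subtopology Y S') \<inter> \<Inter>\<U> \<and> y \<in> W"
            using xS' x(1) Ob(2) tS by (intro exI[of _ x]) auto
        qed
      qed
    qed
  qed
qed

lemma Baire_homeo:
  assumes hom: "homeomorphic_map X X' f" and B: "Baire_space X'"
  shows "Baire_space X"
  unfolding Baire_space_def
proof (intro allI impI)
  fix \<U> assume H: "countable \<U> \<and> (\<forall>U\<in>\<U>. openin X U \<and> X closure_of U = topspace X)"
  have sur: "f ` topspace X = topspace X'" and inj: "inj_on f (topspace X)"
    using hom homeomorphic_imp_surjective_map homeomorphic_imp_injective_map by blast+
  have Ut: "U \<subseteq> topspace X" if "U \<in> \<U>" for U using H that openin_subset by blast
  have "\<forall>U'\<in>(\<lambda>U. f ` U) ` \<U>. openin X' U' \<and> X' closure_of U' = topspace X'"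
  proof
    fix U' assume "U' \<in> (\<lambda>U. f ` U) ` \<U>"
    then obtain U where U: "U \<in> \<U>" "U' = f ` U" by blast
    have "openin X' U'" using U H hom homeomorphic_map_openness_eq Ut by metis
    moreover have "X' closure_of U' = topspace X'"
      using homeomorphic_map_closure_of[OF hom Ut[OF U(1)]] U H sur by simp
    ultimately show "openin X' U' \<and> X' closure_of U' = topspace X'" by blast
  qed
  moreover have "countable ((\<lambda>U. f ` U) ` \<U>)" using H by simp
  ultimately have cl: "X' closure_of (topspace X' \<inter> \<Inter>((\<lambda>U. f ` U) ` \<U>)) = topspace X'"
    using B unfolding Baire_space_def by blast
  have eq: "topspace X' \<inter> \<Inter>((\<lambda>U. f ` U) ` \<U>) = f ` (topspace X \<inter> \<Inter>\<U>)"
  proof (rule subset_antisym)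
    show "f ` (topspace X \<inter> \<Inter>\<U>) \<subseteq> topspace X' \<inter> \<Inter>((\<lambda>U. f ` U) ` \<U>)"
      using sur by blast
    show "topspace X' \<inter> \<Inter>((\<lambda>U. f ` U) ` \<U>) \<subseteq> f ` (topspace X \<inter> \<Inter>\<U>)"
    proof
      fix y assume y: "y \<in> topspace X' \<inter> \<Inter>((\<lambda>U. f ` U) ` \<U>)"
      then obtain x where x: "x \<in> topspace X" "y = f x" using sur by auto
      have "x \<in> U" if "U \<in> \<U>" for U
        using y x that inj_on_image_mem_iff[OF inj x(1) Ut[OF that]] by auto
      then show "y \<in> f ` (topspace X \<inter> \<Inter>\<U>)" using x by blast
    qed
  qed
  have "f ` (X closure_of (topspace X \<inter> \<Inter>\<U>)) = f ` topspace X"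
    using cl eq sur homeomorphic_map_closure_of[OF hom, of "topspace X \<inter> \<Inter>\<U>"] by simp
  then show "X closure_of (topspace X \<inter> \<Inter>\<U>) = topspace X"
    using inj_on_image_eq_iff[OF inj closure_of_subset_topspace subset_refl] by blast
qed

theorem corollary10p4:
  fixes X :: "'a topology" and Y :: "'b topology" and S :: "'b set"
  assumes "sober_space Y" and "locally_compact_sat Y"
    and "gdelta_in Y S"
    and "X homeomorphic_space subtopology Y S"
  shows "completely_Baire_space X \<and> Baire_space X"
proof -
  obtain f where hom: "homeomorphic_map X (subtopology Y S) f"
    using assms(4) unfolding homeomorphic_space_def using homeomorphic_maps_imp_map by blast
  have cB: "completely_Baire_space X"
    unfolding completely_Baire_space_def
  proof (intro allI impI)
    fix C assume C: "closedin X C"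
    then have "closedin (subtopology Y S) (f ` C)" using hom homeomorphic_map_closedness_eq by blast
    then obtain F where F: "closedin Y F" "f ` C = F \<inter> S" by (auto simp: closedin_subtopology)
    have Ct: "C \<subseteq> topspace X" using C closedin_subset by blast
    have "f ` (topspace X \<inter> C) = topspace (subtopology Y S) \<inter> f ` C"
      using Ct homeomorphic_imp_surjective_map[OF hom] by auto
    then have "homeomorphic_map (subtopology X C) (subtopology (subtopology Y S) (f ` C)) f"
      by (rule homeomorphic_map_subtopologies[OF hom])
    moreover have "subtopology (subtopology Y S) (f ` C) = subtopology Y (S \<inter> F)"
      using F(2) by (simp add: subtopology_subtopology Int_commute Int_left_commute)
    ultimately have "homeomorphic_map (subtopology X C) (subtopology Y (S \<inter> F)) f" by simp
    then show "Baire_space (subtopology X C)"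
      using Baire_homeo Baire_sub[OF assms(1,2,3) F(1)] by blast
  qed
  moreover have "Baire_space X"
    using cB unfolding completely_Baire_space_def by (metis closedin_topspace subtopology_topspace)
  ultimately show ?thesis by blast
qed

end
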